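(* Let $m$ be the number of registers of a HyperLogLog sketch into which $n$ distinct elements have been inserted, let $\beta\in(0,1)$, and suppose $n>2m^2/\beta$. Let $B=\log_2\frac{n}{m}$ and $\Delta=\log_2\frac{2m}{\beta}$. Then with probability at least $1-\beta$, all register values $M[j]$, $j\in[m]$, lie in the interval $(B-\Delta,B+\Delta)$, so that all register values can be represented as offsets from the base value $B$ using at most $\lceil \log_2\log_2\frac{2m}{\beta}\rceil+1=O(\log\log m)$ bits each.
   Context: HyperLogLog model: each of $n$ distinct elements $y_i$ is assigned a register index $f(y_i)$ uniform in $[m]=\{1,\dots,m\}$ and a value $\rho_i$ with $\Pr[\rho_i=k]=2^{-k}$, $k=1,2,\dots$ (the position of the first one-bit of a uniformly random hash value), all independent; register $M[j]$ is the maximum of $\rho_i$ over elements with $f(y_i)=j$ (0 if none), so $\Pr[M[j]\le k]=(1-\frac{1}{m2^k})^n$ for integers $k\ge 0$. Convention: register values are treated as real-valued continuous random variables whose individual distribution function is $\Pr[M[j]\le t]=\Pr[M[j]<t]=(1-\frac{1}{m2^t})^n$ for real $t$. *)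

theory Defs
  imports "HOL-Probability.Probability"
begin

text \<open>Each element i is assigned a pair
  (f i, rho i): register index f i uniform on {1..m}, and rho i with Pr[rho i = k] = 2^-k
  for k >= 1 (rho = 1 + Geometric(1/2) counting failures).\<close>

definition rho_pmf :: "nat pmf" where
  "rho_pmf = map_pmf Suc (geometric_pmf (1/2))"

definition hll_pmf :: "nat \<Rightarrow> nat \<Rightarrow> (nat \<Rightarrow> nat \<times> nat) pmf" where
  "hll_pmf m n = Pi_pmf {..<n} (0, 0) (\<lambda>_. pair_pmf (pmf_of_set {1..m}) rho_pmf)"

definition register :: "nat \<Rightarrow> nat \<Rightarrow> (nat \<Rightarrow> nat \<times> nat) \<Rightarrow> nat" where
  "register n j \<omega> = Max (insert 0 {snd (\<omega> i) | i. i < n \<and> fst (\<omega> i) = j})"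

end

theory Submission imports Defs begin

lemma poly3:
  fixes y :: real
  assumes "0 \<le> y" "y \<le> 1"
  shows "1 - real n * y + real n * (real n - 1) / 2 * y^2
           - real n * (real n - 1) * (real n - 2) / 6 * y^3 \<le> (1 - y)^n"
proof (induction n)
  case 0 then show ?case by simp
next
  case (Suc n)
  have nn: "0 \<le> real n * (real n - 1) * (real n - 2)"
  proof (cases "n \<ge> 2")
    case True then show ?thesis by (simp add: mult_nonneg_nonneg)
  next
    case False then have "n = 0 \<or> n = 1" by auto
    then show ?thesis by auto
  qed
  have eq: "(1 - y) * (1 - real n * y + real n * (real n - 1) / 2 * y^2
           - real n * (real n - 1) * (real n - 2) / 6 * y^3)
      = (1 - real (Suc n) * y + real (Suc n) * (real (Suc n) - 1) / 2 * y^2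
           - real (Suc n) * (real (Suc n) - 1) * (real (Suc n) - 2) / 6 * y^3)
        + real n * (real n - 1) * (real n - 2) / 6 * y^4"
    unfolding of_nat_Suc by (simp add: field_simps power2_eq_square power3_eq_cube power4_eq_xxxx)
  have "(1 - y) * (1 - real n * y + real n * (real n - 1) / 2 * y^2
           - real n * (real n - 1) * (real n - 2) / 6 * y^3) \<le> (1 - y) * (1-y)^n"
    using Suc assms by (intro mult_left_mono) auto
  moreover have "0 \<le> real n * (real n - 1) * (real n - 2) / 6 * y^4"
    using nn assms by simp
  ultimately show ?case using eq by simp
qed

lemma bonf:
  fixes \<beta> :: real
  assumes "0 < \<beta>" "\<beta> < 1" "n \<ge> 3"
  shows "1 - \<beta> + \<beta>^2/6 \<le> (1 - \<beta>/n)^n"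
proof -
  have n0: "real n \<ge> 3" using assms by simp
  define y where "y = \<beta> / n"
  have y: "0 \<le> y" "y \<le> 1" using assms n0 by (auto simp: y_def)
  have ny: "real n * y = \<beta>" using n0 by (simp add: y_def)
  have "1 - \<beta> + \<beta>^2/6 \<le> 1 - real n * y + real n * (real n - 1) / 2 * y^2
           - real n * (real n - 1) * (real n - 2) / 6 * y^3"
  proof -
    have e2: "real n * (real n - 1) / 2 * y^2 = (real n - 1) * \<beta>^2 / (2 * real n)"
      using n0 by (simp add: y_def field_simps power2_eq_square)
    have e3: "real n * (real n - 1) * (real n - 2) / 6 * y^3
        = (real n - 1) * (real n - 2) * \<beta>^3 / (6 * real n ^ 2)"
      using n0 by (simp add: y_def field_simps power2_eq_square power3_eq_cube)
    have key: "\<beta>^2 * real n ^ 2 \<le> 3 * real n * (real n - 1) * \<beta>^2 - (real n - 1) * (real n - 2) * \<beta>^3"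
    proof -
      have "(real n - 1) * (real n - 2) * \<beta>^3 \<le> (real n - 1) * (real n - 2) * \<beta>^2"
        using assms n0 by (intro mult_left_mono) (auto simp: power2_eq_square power3_eq_cube)
      moreover have "\<beta>^2 * real n ^ 2 \<le> 3 * real n * (real n - 1) * \<beta>^2 - (real n - 1) * (real n - 2) * \<beta>^2"
      proof -
        have "real n ^ 2 \<le> 3 * real n * (real n - 1) - (real n - 1) * (real n - 2)"
        proof -
          have "real n * real n \<ge> 3*3" using n0 by (intro mult_mono) auto
          then show ?thesis by (simp add: algebra_simps power2_eq_square)
        qed
        then have "\<beta>^2 * real n ^ 2 \<le> \<beta>^2 * (3 * real n * (real n - 1) - (real n - 1) * (real n - 2))"
          by (rule mult_left_mono) simp
        then show ?thesis by (simp add: algebra_simps)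
      qed
      ultimately show ?thesis by linarith
    qed
    have "(real n - 1) * \<beta>^2 / (2 * real n) - (real n - 1) * (real n - 2) * \<beta>^3 / (6 * real n ^ 2)
       = (3 * real n * (real n - 1) * \<beta>^2 - (real n - 1) * (real n - 2) * \<beta>^3) / (6 * real n^2)"
      using n0 by (simp add: field_simps power2_eq_square)
    also have "\<dots> \<ge> (\<beta>^2 * real n^2)/(6*real n^2)" by (rule divide_right_mono[OF key]) simp
    also have "(\<beta>^2 * real n^2)/(6*real n^2) = \<beta>^2/6" using n0 by simp
    finally have "\<beta>^2/6 \<le> (real n - 1) * \<beta>^2 / (2 * real n) - (real n - 1) * (real n - 2) * \<beta>^3 / (6 * real n ^ 2)" .
    then show ?thesis using e2 e3 ny by linarith
  qed
  also have "\<dots> \<le> (1 - y)^n" by (rule poly3[OF y])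
  finally show ?thesis by (simp add: y_def)
qed

lemma expb:
  fixes \<beta> :: real and m :: nat
  assumes "0 < \<beta>" "\<beta> < 1" "m \<ge> 1"
  shows "real m * exp (- (2 * real m / \<beta>)) \<le> \<beta>^2/6"
proof -
  define s where "s = real m / \<beta>"
  have s0: "s > 0" using assms by (simp add: s_def)
  have e1: "exp 1 \<ge> (5/2::real)" using exp_lower_Taylor_quadratic[of 1] by simp
  have "exp (s - 1) \<ge> s" using exp_ge_add_one_self[of "s-1"] by simp
  then have "exp s \<ge> exp 1 * s" using s0 by (simp add: exp_diff field_simps)
  moreover have "(5/2) * s \<le> exp 1 * s" using e1 s0 by (intro mult_right_mono) auto
  ultimately have es: "exp s \<ge> 5/2 * s" by linarith
  have "exp (2* s) = exp s * exp s" by (simp add: exp_add[symmetric])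
  also have "\<dots> \<ge> (5/2* s) * (5/2* s)" using es s0 by (intro mult_mono) auto
  finally have e2: "exp (2* s) \<ge> 25/4 * s^2" by (simp add: power2_eq_square)
  have mm: "real m * 1 \<le> real m * real m" using assms by (intro mult_left_mono) auto
  have "6 * real m / \<beta>^2 \<le> 6 * real m^2 / \<beta>^2"
    using mm by (intro divide_right_mono) (auto simp: power2_eq_square)
  moreover have "6 * s^2 = 6 * real m^2/\<beta>^2" by (simp add: s_def power_divide)
  ultimately have "6 * real m / \<beta>^2 \<le> 6 * s^2" by linarith
  then have big: "6 * real m / \<beta>^2 \<le> exp (2* s)" using e2 zero_le_power2[of s] by linarith
  have "real m * exp (- (2 * real m / \<beta>)) = real m / exp (2* s)"
    by (simp add: s_def exp_minus field_simps)
  also have "\<dots> \<le> real m / (6 * real m / \<beta>^2)"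
    using assms big by (intro divide_left_mono) auto
  also have "\<dots> = \<beta>^2/6" using assms by simp
  finally show ?thesis .
qed

lemma geo_less: "measure_pmf.prob (geometric_pmf (1/2)) {..<k} = 1 - (1/2::real)^k"
proof -
  have "measure_pmf.prob (geometric_pmf (1/2)) {..<k} = (\<Sum>i<k. pmf (geometric_pmf (1/2)) i)"
    by (rule measure_measure_pmf_finite) simp
  also have "\<dots> = (\<Sum>i<k. (1/2::real)^i * (1/2))" by simp
  also have "\<dots> = 1 - (1/2::real)^k" by (induction k) simp_all
  finally show ?thesis .
qed

lemma rho_le: "measure_pmf.prob rho_pmf {..k} = 1 - (1/2::real)^k"
proof -
  have "Suc -` {..k} = {..<k}" by auto
  then show ?thesis unfolding rho_pmf_def by (simp add: geo_less)
qed

lemma rho_gt: "measure_pmf.prob rho_pmf {k<..} = (1/2::real)^k"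
proof -
  have "{k<..} = space (measure_pmf rho_pmf) - {..k}" by auto
  then have "measure_pmf.prob rho_pmf {k<..} = 1 - measure_pmf.prob rho_pmf {..k}"
    using measure_pmf.prob_compl[of "{..k}" rho_pmf] by simp
  then show ?thesis by (simp add: rho_le)
qed

lemma pU: "measure_pmf.prob (pair_pmf (pmf_of_set {1..m::nat}) rho_pmf) (UNIV \<times> {..k})
   = 1 - (1/2::real)^k"
  by (subst measure_pmf_prob_product) (auto simp: rho_le intro: countableI_type)

lemma pL:
  assumes "j \<in> {1..m}"
  shows "measure_pmf.prob (pair_pmf (pmf_of_set {1..m}) rho_pmf) {p. fst p = j \<longrightarrow> snd p \<le> L}
   = 1 - (1/2::real)^L / real m"
proof -
  let ?P = "pair_pmf (pmf_of_set {1..m}) rho_pmf"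
  have ne: "{1..m} \<noteq> {}" "finite {1..m}" using assms by auto
  have "{p. fst p = j \<longrightarrow> snd p \<le> L} = space (measure_pmf ?P) - {j} \<times> {L<..}" by auto
  then have "measure_pmf.prob ?P {p. fst p = j \<longrightarrow> snd p \<le> L} = 1 - measure_pmf.prob ?P ({j} \<times> {L<..})"
    using measure_pmf.prob_compl[of "{j} \<times> {L<..}" ?P] by simp
  also have "measure_pmf.prob ?P ({j} \<times> {L<..}) = measure_pmf.prob (pmf_of_set {1..m}) {j} * (1/2::real)^L"
    by (subst measure_pmf_prob_product) (auto simp: rho_gt)
  also have "measure_pmf.prob (pmf_of_set {1..m}) {j} = 1 / real m"
    using assms ne by (simp add: measure_pmf_of_set)
  finally show ?thesis by simp
qed

lemma prod_event:
  "measure_pmf.prob (hll_pmf m n) {\<omega>. \<forall>i<n. \<omega> i \<in> S}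
     = measure_pmf.prob (pair_pmf (pmf_of_set {1..m}) rho_pmf) S ^ n"
proof -
  have "{\<omega>. \<forall>i<n. \<omega> i \<in> S} = Pi {..<n} (\<lambda>_. S)" by (auto simp: Pi_def)
  then show ?thesis unfolding hll_pmf_def by (simp add: measure_Pi_pmf_Pi)
qed

lemma reg_fin: "finite {snd (\<omega> i) | i. i < (n::nat) \<and> fst (\<omega> i) = j}"
proof -
  have f: "finite {i. i < n \<and> fst (\<omega> i) = j}" by (rule finite_subset[of _ "{..<n}"]) auto
  have "{snd (\<omega> i) | i. i < n \<and> fst (\<omega> i) = j} = (\<lambda>i. snd (\<omega> i)) ` {i. i < n \<and> fst (\<omega> i) = j}" by auto
  then show ?thesis using f by simp
qed

lemma reg_ge: "i < n \<Longrightarrow> fst (\<omega> i) = j \<Longrightarrow> snd (\<omega> i) \<le> register n j \<omega>"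
  unfolding register_def using reg_fin[of \<omega> n j] by (intro Max_ge) auto

lemma reg_le: "(\<And>i. i < n \<Longrightarrow> fst (\<omega> i) = j \<Longrightarrow> snd (\<omega> i) \<le> L) \<Longrightarrow> register n j \<omega> \<le> L"
  unfolding register_def using reg_fin[of \<omega> n j] by (subst Max_le_iff) auto

lemma reg_pos: "register n j \<omega> > 0 \<Longrightarrow> \<exists>i<n. fst (\<omega> i) = j \<and> snd (\<omega> i) = register n j \<omega>"
proof -
  assume p: "register n j \<omega> > 0"
  have "register n j \<omega> \<in> insert 0 {snd (\<omega> i) | i. i < n \<and> fst (\<omega> i) = j}"
    unfolding register_def using reg_fin[of \<omega> n j] by (intro Max_in) auto
  with p show ?thesis by auto
qed

theorem theorem3p4:
  fixes m n :: nat and \<beta> :: real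
  assumes "m > 0" and "0 < \<beta>" and "\<beta> < 1"
    and "real n > 2 * (real m)^2 / \<beta>"
  defines "B \<equiv> log 2 (real n / real m)" and "\<Delta> \<equiv> log 2 (2 * real m / \<beta>)"
  shows "measure_pmf.prob (hll_pmf m n)
           {\<omega>. \<forall>j\<in>{1..m}. B - \<Delta> < real (register n j \<omega>) \<and> real (register n j \<omega>) < B + \<Delta>}
         \<ge> 1 - \<beta> \<and>
         card {k::int. B - \<Delta> < real_of_int k \<and> real_of_int k < B + \<Delta>}
         \<le> 2 ^ (nat \<lceil>log 2 (log 2 (2 * real m / \<beta>))\<rceil> + 1)"
proof -
  have m1: "real m \<ge> 1" using assms(1) by simp
  have b0: "0 < \<beta>" "\<beta> < 1" using assms by auto
  have msq: "real m ^ 2 \<ge> 1" using m1 by (simp add: one_le_power)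
  have "2 * (real m)^2 / \<beta> > 2"
  proof -
    have "\<beta> * (real m)^2 < 1 * (real m)^2" using b0 msq assms(1) by (intro mult_strict_right_mono) auto
    then have "2 * (real m)^2 / \<beta> > 2 * (real m)^2" using b0 msq by (simp add: field_simps)
    then show ?thesis using msq by linarith
  qed
  then have n3r: "real n > 2" using assms(4) by linarith
  then have n3: "n \<ge> 3" by simp
  have npos: "real n > 0" using n3r by simp
  have mpos: "real m > 0" using m1 by simp
  have a1: "real n / real m > 0" using npos mpos by simp
  have a2: "2 * real m / \<beta> > 0" using mpos b0 by simp
  have pB: "2 powr B = real n / real m" unfolding B_def using a1 by simp
  have pD: "2 powr \<Delta> = 2 * real m / \<beta>" unfolding \<Delta>_def using a2 by simp
  have pBD: "2 powr (B + \<Delta>) = 2 * real n / \<beta>"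
    using pB pD mpos by (simp add: powr_add)
  have pBD': "2 powr (B - \<Delta>) = real n * \<beta> / (2 * real m ^ 2)"
  proof -
    have "2 powr (B - \<Delta>) = (real n / real m) / (2 * real m / \<beta>)" using pB pD by (simp add: powr_diff)
    also have "\<dots> = real n * \<beta> / (2 * real m ^ 2)" using mpos b0 by (simp add: power2_eq_square)
    finally show ?thesis .
  qed
  have nb: "real n * \<beta> > 2 * real m ^ 2" using assms(4) b0 by (simp add: field_simps)
  have "2 powr (B - \<Delta>) > 1" unfolding pBD' using nb mpos by (simp add: field_simps)
  then have BDpos: "B - \<Delta> > 0"
    using powr_less_cancel_iff[of "2::real" 0 "B - \<Delta>"] by simp
  have "2 * real m / \<beta> > 2" using m1 b0 by (simp add: field_simps)
  then have Dg1: "\<Delta> > 1" unfolding \<Delta>_def by (simp add: less_log_iff)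
  define K where "K = nat \<lceil>B + \<Delta>\<rceil>"
  define L where "L = nat \<lfloor>B - \<Delta>\<rfloor>"
  have K1: "K \<ge> 1" unfolding K_def using BDpos Dg1 by linarith
  have KR: "real K \<ge> B + \<Delta>" unfolding K_def by linarith
  have LR: "real L \<le> B - \<Delta>" unfolding L_def using BDpos by linarith
  define p where "p = (1/2::real)^(K-1)"
  define q where "q = (1/2::real)^L / real m"
  have p_le: "p \<le> \<beta> / real n"
  proof -
    have "real (K-1) \<ge> B + \<Delta> - 1" using KR K1 by simp
    then have "2 powr real (K-1) \<ge> 2 powr (B + \<Delta> - 1)" by simp
    also have "2 powr (B + \<Delta> - 1) = real n / \<beta>" using pBD by (simp add: powr_diff)
    finally have "(2::real)^(K-1) \<ge> real n / \<beta>" by (simp add: powr_realpow)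
    then have "1 / (2::real)^(K-1) \<le> 1 / (real n / \<beta>)" using npos b0
      by (intro divide_left_mono) auto
    then show ?thesis unfolding p_def using npos b0 by (simp add: power_one_over)
  qed
  have p01: "0 \<le> p" "p \<le> 1" unfolding p_def by (auto simp: power_le_one)
  have q_ge: "q \<ge> 2 * real m / (real n * \<beta>)"
  proof -
    have "2 powr real L \<le> 2 powr (B - \<Delta>)" using LR by simp
    then have h: "(2::real)^L \<le> real n * \<beta> / (2 * real m ^ 2)" using pBD' by (simp add: powr_realpow)
    have "real m * (2::real)^L \<le> real m * (real n * \<beta> / (2 * real m ^ 2))"
      using h mpos by (intro mult_left_mono) auto
    also have "\<dots> = real n * \<beta> / (2 * real m)" using mpos by (simp add: power2_eq_square)
    finally have h2: "real m * (2::real)^L \<le> real n * \<beta> / (2 * real m)" .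
    have "1 / (real n * \<beta> / (2 * real m)) \<le> 1 / (real m * (2::real)^L)"
      using h2 mpos npos b0 by (intro divide_left_mono) auto
    then show ?thesis unfolding q_def using mpos npos b0 by (simp add: power_one_over field_simps)
  qed
  have q01: "0 \<le> q" "q \<le> 1"
  proof -
    have "(1/2::real)^L \<le> 1" by (simp add: power_le_one)
    then have "q \<le> 1 / real m" unfolding q_def using mpos by (intro divide_right_mono) auto
    also have "1 / real m \<le> 1" using m1 by simp
    finally show "q \<le> 1" .
    show "0 \<le> q" unfolding q_def by simp
  qed
  let ?P = "hll_pmf m n"
  define G where "G = {\<omega>. \<forall>j\<in>{1..m}. B - \<Delta> < real (register n j \<omega>) \<and> real (register n j \<omega>) < B + \<Delta>}"
  define U where "U = - {\<omega>. \<forall>i<n. \<omega> i \<in> (UNIV :: nat set) \<times> {..K-1}}"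
  define Lj where "Lj = (\<lambda>j. {\<omega>. \<forall>i<n. \<omega> i \<in> {pp. fst pp = (j::nat) \<longrightarrow> snd pp \<le> L}})"
  have sub: "- G \<subseteq> U \<union> (\<Union>j\<in>{1..m}. Lj j)"
  proof
    fix \<omega> assume "\<omega> \<in> - G"
    then obtain j where j: "j \<in> {1..m}" and
      bad: "\<not> (B - \<Delta> < real (register n j \<omega>)) \<or> \<not> (real (register n j \<omega>) < B + \<Delta>)"
      unfolding G_def by auto
    show "\<omega> \<in> U \<union> (\<Union>j\<in>{1..m}. Lj j)"
    proof (cases "real (register n j \<omega>) < B + \<Delta>")
      case False
      then have "register n j \<omega> \<ge> K" unfolding K_def by linarith
      then have "register n j \<omega> > 0" using K1 by simp
      then obtain i where "i < n" "fst (\<omega> i) = j" "snd (\<omega> i) = register n j \<omega>"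
        using reg_pos by blast
      with \<open>register n j \<omega> \<ge> K\<close> K1 have "\<omega> \<in> U" unfolding U_def by (auto intro!: exI[of _ i])
      then show ?thesis by blast
    next
      case True
      then have "real (register n j \<omega>) \<le> B - \<Delta>" using bad by linarith
      then have rl: "register n j \<omega> \<le> L" unfolding L_def by linarith
      have "\<omega> \<in> Lj j" unfolding Lj_def using reg_ge[of _ n \<omega> j] rl by fastforce
      then show ?thesis using j by blast
    qed
  qed
  have probU: "measure_pmf.prob ?P U = 1 - (1 - p)^n"
  proof -
    have "measure_pmf.prob ?P U = 1 - measure_pmf.prob ?P {\<omega>. \<forall>i<n. \<omega> i \<in> (UNIV :: nat set) \<times> {..K-1}}"
      unfolding U_def using measure_pmf.prob_compl[of "{\<omega>. \<forall>i<n. \<omega> i \<in> (UNIV :: nat set) \<times> {..K-1}}" ?P]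
      by (simp add: Compl_eq_Diff_UNIV)
    also have "\<dots> = 1 - (1 - p)^n" unfolding prod_event pU p_def ..
    finally show ?thesis .
  qed
  have probL: "measure_pmf.prob ?P (Lj j) = (1 - q)^n" if "j \<in> {1..m}" for j
    unfolding Lj_def prod_event pL[OF that] q_def ..
  have "measure_pmf.prob ?P (- G) \<le> measure_pmf.prob ?P (U \<union> (\<Union>j\<in>{1..m}. Lj j))"
    using sub by (intro measure_pmf.finite_measure_mono) auto
  also have "\<dots> \<le> measure_pmf.prob ?P U + measure_pmf.prob ?P (\<Union>j\<in>{1..m}. Lj j)"
    by (intro measure_subadditive) (auto simp: measure_pmf.emeasure_eq_measure)
  also have "measure_pmf.prob ?P (\<Union>j\<in>{1..m}. Lj j) \<le> (\<Sum>j\<in>{1..m}. measure_pmf.prob ?P (Lj j))"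
    by (intro measure_pmf.finite_measure_subadditive_finite) auto
  also have "(\<Sum>j\<in>{1..m}. measure_pmf.prob ?P (Lj j)) = real m * (1 - q)^n"
    using probL by simp
  finally have cG: "measure_pmf.prob ?P (- G) \<le> 1 - (1 - p)^n + real m * (1 - q)^n"
    using probU by simp
  have "(1 - \<beta> / real n)^n \<le> (1 - p)^n"
    using p_le b0 npos n3r by (intro power_mono) (auto simp: field_simps)
  moreover have "1 - \<beta> + \<beta>^2/6 \<le> (1 - \<beta>/real n)^n" using bonf[OF b0 n3] .
  ultimately have t1: "1 - (1 - p)^n \<le> \<beta> - \<beta>^2/6" by linarith
  have "(1 - q)^n \<le> exp (- q)^n"
    using q01 by (intro power_mono) (auto simp: exp_ge_add_one_self[of "-q", simplified])
  also have "\<dots> = exp (- (real n * q))" by (simp add: exp_of_nat_mult[symmetric])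
  also have "\<dots> \<le> exp (- (2 * real m / \<beta>))"
  proof -
    have "real n * (2 * real m / (real n * \<beta>)) \<le> real n * q"
      using q_ge npos by (intro mult_left_mono) auto
    then have "2 * real m / \<beta> \<le> real n * q" using npos by simp
    then show ?thesis by simp
  qed
  finally have "real m * (1 - q)^n \<le> real m * exp (- (2 * real m / \<beta>))"
    using mpos by (intro mult_left_mono) auto
  also have "\<dots> \<le> \<beta>^2/6" using expb[OF b0] assms(1) by simp
  finally have t2: "real m * (1 - q)^n \<le> \<beta>^2/6" .
  have "measure_pmf.prob ?P G = 1 - measure_pmf.prob ?P (- G)"
    using measure_pmf.prob_compl[of "-G" ?P] by (simp add: Compl_eq_Diff_UNIV Diff_Diff_Int)
  then have part1: "measure_pmf.prob ?P G \<ge> 1 - \<beta>" using cG t1 t2 by linarith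
  define c where "c = nat \<lceil>log 2 (log 2 (2 * real m / \<beta>))\<rceil>"
  define lo where "lo = \<lfloor>B - \<Delta>\<rfloor> + 1"
  define hi where "hi = \<lceil>B + \<Delta>\<rceil> - 1"
  have ssub: "{k::int. B - \<Delta> < real_of_int k \<and> real_of_int k < B + \<Delta>} \<subseteq> {lo..hi}"
  proof
    fix k assume "k \<in> {k::int. B - \<Delta> < real_of_int k \<and> real_of_int k < B + \<Delta>}"
    then have "B - \<Delta> < real_of_int k" "real_of_int k < B + \<Delta>" by auto
    then have "\<lfloor>B - \<Delta>\<rfloor> < k" "k < \<lceil>B + \<Delta>\<rceil>" by (simp_all add: floor_less_iff less_ceiling_iff)
    then show "k \<in> {lo..hi}" unfolding lo_def hi_def by simp
  qed
  have "card {k::int. B - \<Delta> < real_of_int k \<and> real_of_int k < B + \<Delta>} \<le> card {lo..hi}"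
    using ssub by (intro card_mono) auto
  also have "card {lo..hi} = nat (hi - lo + 1)" by simp
  also have "nat (hi - lo + 1) \<le> 2 ^ (c + 1)"
  proof -
    have f1: "real_of_int \<lceil>B + \<Delta>\<rceil> < B + \<Delta> + 1" using ceiling_correct[of "B + \<Delta>"] by linarith
    have f2: "B - \<Delta> < real_of_int \<lfloor>B - \<Delta>\<rfloor> + 1" by (rule real_of_int_floor_add_one_gt)
    have "real_of_int (hi - lo + 1) = real_of_int \<lceil>B + \<Delta>\<rceil> - real_of_int \<lfloor>B - \<Delta>\<rfloor> - 1"
      unfolding hi_def lo_def by simp
    then have "real_of_int (hi - lo + 1) < 2 * \<Delta> + 1" using f1 f2 by linarith
    moreover have "2 * \<Delta> \<le> 2 ^ (c + 1)"
    proof -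
      have "real c \<ge> log 2 \<Delta>" unfolding c_def \<Delta>_def by linarith
      then have "2 powr real c \<ge> 2 powr (log 2 \<Delta>)" by simp
      then have "(2::real) ^ c \<ge> \<Delta>" using Dg1 by (simp add: powr_realpow)
      then show ?thesis by simp
    qed
    ultimately have "real_of_int (hi - lo + 1) < real_of_int (2 ^ (c+1)) + 1" by simp
    then have "hi - lo + 1 \<le> 2 ^ (c+1)" by linarith
    then show ?thesis by (simp add: nat_le_iff)
  qed
  finally have part2: "card {k::int. B - \<Delta> < real_of_int k \<and> real_of_int k < B + \<Delta>} \<le> 2 ^ (c + 1)" .
  show ?thesis using part1 part2 unfolding G_def c_def by simp
qed

end
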